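(* Let $u\in C([0,\infty)^2)$ be a viscosity subsolution and $v\in C([0,\infty)^2)$ a viscosity supersolution of \[ \partial_t f - 2(\partial_h f)^2 = 0 \ \text{ in } (0,\infty)^2, \qquad -\partial_h f = 0 \ \text{ on } (0,\infty)\times\{0\}, \] such that both $u$ and $v$ are uniformly Lipschitz continuous in the variable $h$. Then \[ \sup_{[0,\infty)^2}(u-v)=\sup_{\{0\}\times[0,\infty)}(u-v). \]
   Context: Viscosity solutions: $f\in C([0,\infty)^2)$ (variables $(t,h)$) is a viscosity subsolution if for every $(t,h)\in(0,\infty)\times[0,\infty)$ and $\phi\in C^\infty((0,\infty)\times[0,\infty))$ such that $f-\phi$ has a local maximum at $(t,h)$, we have $(\partial_t\phi-2(\partial_h\phi)^2)(t,h)\le0$ if $h>0$, and $\min(-\partial_h\phi,\partial_t\phi-2(\partial_h\phi)^2)(t,h)\le0$ if $h=0$. It is a viscosity supersolution if for every such $(t,h),\phi$ with $f-\phi$ having a local minimum at $(t,h)$, we have $(\partial_t\phi-2(\partial_h\phi)^2)(t,h)\ge0$ if $h>0$, and $\max(-\partial_h\phi,\partial_t\phi-2(\partial_h\phi)^2)(t,h)\ge0$ if $h=0$. "Uniformly Lipschitz in $h$" means there is $L<\infty$ with $|u(t,h)-u(t,h')|\le L|h-h'|$ for all $t,h,h'\ge0$. *)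

theory Defs
  imports "HOL-Analysis.Analysis"
begin

fun Ck_on :: "nat \<Rightarrow> (real \<times> real) set \<Rightarrow> (real \<times> real \<Rightarrow> real) \<Rightarrow> bool" where
  "Ck_on 0 S f = continuous_on S f"
| "Ck_on (Suc k) S f =
     (\<exists>f'. (\<forall>x\<in>S. (f has_derivative f' x) (at x)) \<and> (\<forall>w. Ck_on k S (\<lambda>x. f' x w)))"

definition smooth_on :: "(real \<times> real) set \<Rightarrow> (real \<times> real \<Rightarrow> real) \<Rightarrow> bool" where
  "smooth_on S f \<longleftrightarrow> (\<forall>k. Ck_on k S f)"

definition quadrant :: "(real \<times> real) set" where
  "quadrant = {0..} \<times> {0..}"

definition test_dom :: "(real \<times> real) set" where
  "test_dom = {0<..} \<times> {0..}"

text \<open>phi \<in> C^\<infinity>((0,\<infinity>)\<times>[0,\<infinity>)): restriction of a smooth function on an open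
  neighbourhood of (0,\<infinity>)\<times>[0,\<infinity>).\<close>
definition test_function :: "(real \<times> real \<Rightarrow> real) \<Rightarrow> bool" where
  "test_function \<phi> \<longleftrightarrow> (\<exists>U. open U \<and> test_dom \<subseteq> U \<and> smooth_on U \<phi>)"

definition local_max_at :: "(real \<times> real \<Rightarrow> real) \<Rightarrow> (real \<times> real) \<Rightarrow> bool" where
  "local_max_at g x \<longleftrightarrow> (\<exists>e>0. \<forall>y\<in>test_dom. dist y x < e \<longrightarrow> g y \<le> g x)"

definition local_min_at :: "(real \<times> real \<Rightarrow> real) \<Rightarrow> (real \<times> real) \<Rightarrow> bool" where
  "local_min_at g x \<longleftrightarrow> (\<exists>e>0. \<forall>y\<in>test_dom. dist y x < e \<longrightarrow> g x \<le> g y)"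

text \<open>D (1,0) = \<partial>_t \<phi>, D (0,1) = \<partial>_h \<phi> at the point, where D is the derivative of \<phi>.\<close>
definition viscosity_subsolution :: "(real \<times> real \<Rightarrow> real) \<Rightarrow> bool" where
  "viscosity_subsolution f \<longleftrightarrow> continuous_on quadrant f \<and>
    (\<forall>t h \<phi> D. t > 0 \<and> h \<ge> 0 \<and> test_function \<phi> \<and> (\<phi> has_derivative D) (at (t, h)) \<and>
       local_max_at (\<lambda>y. f y - \<phi> y) (t, h) \<longrightarrow>
       (if h > 0 then D (1, 0) - 2 * (D (0, 1))\<^sup>2 \<le> 0
        else min (- D (0, 1)) (D (1, 0) - 2 * (D (0, 1))\<^sup>2) \<le> 0))"

definition viscosity_supersolution :: "(real \<times> real \<Rightarrow> real) \<Rightarrow> bool" where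
  "viscosity_supersolution f \<longleftrightarrow> continuous_on quadrant f \<and>
    (\<forall>t h \<phi> D. t > 0 \<and> h \<ge> 0 \<and> test_function \<phi> \<and> (\<phi> has_derivative D) (at (t, h)) \<and>
       local_min_at (\<lambda>y. f y - \<phi> y) (t, h) \<longrightarrow>
       (if h > 0 then D (1, 0) - 2 * (D (0, 1))\<^sup>2 \<ge> 0
        else max (- D (0, 1)) (D (1, 0) - 2 * (D (0, 1))\<^sup>2) \<ge> 0))"

definition unif_lipschitz_in_h :: "(real \<times> real \<Rightarrow> real) \<Rightarrow> bool" where
  "unif_lipschitz_in_h f \<longleftrightarrow>
     (\<exists>L. \<forall>t h h'. t \<ge> 0 \<and> h \<ge> 0 \<and> h' \<ge> 0 \<longrightarrow> \<bar>f (t, h) - f (t, h')\<bar> \<le> L * \<bar>h - h'\<bar>)"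

end

theory Submission
  imports Defs
begin


lemma Ck_const: "Ck_on k S (\<lambda>x. c)"
proof (induction k arbitrary: c)
  case 0 then show ?case by (simp add: continuous_on_const)
next
  case (Suc k)
  show ?case
    by (auto intro!: exI[of _ "\<lambda>x w. 0"] Suc)
qed

lemma Ck_linear: "bounded_linear l \<Longrightarrow> Ck_on k S (\<lambda>x. l x)"
proof (cases k)
  case 0
  assume "bounded_linear l"
  then show ?thesis using 0 by (simp add: linear_continuous_on)
next
  case (Suc m)
  assume l: "bounded_linear l"
  show ?thesis using Suc
    by (auto intro!: exI[of _ "\<lambda>x w. l w"] Ck_const bounded_linear.has_derivative[OF l, of "\<lambda>x. x"] has_derivative_ident)
qed

lemma Ck_fst: "Ck_on k S (\<lambda>x. fst x)"
  by (rule Ck_linear) (rule bounded_linear_fst)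

lemma Ck_snd: "Ck_on k S (\<lambda>x. snd x)"
  by (rule Ck_linear) (rule bounded_linear_snd)

lemma Ck_mono: "Ck_on (Suc k) S f \<Longrightarrow> Ck_on k S f"
proof (induction k arbitrary: f)
  case 0
  then obtain f' where "\<forall>x\<in>S. (f has_derivative f' x) (at x)" unfolding Ck_on.simps by blast
  then have "\<forall>x\<in>S. isCont f x" using has_derivative_continuous by blast
  then show ?case
    unfolding Ck_on.simps by (rule continuous_at_imp_continuous_on)
next
  case (Suc k)
  then obtain f' where f': "\<forall>x\<in>S. (f has_derivative f' x) (at x)" "\<forall>w. Ck_on (Suc k) S (\<lambda>x. f' x w)"
    unfolding Ck_on.simps(2)[of "Suc k"] by blast
  have "\<forall>w. Ck_on k S (\<lambda>x. f' x w)" using f'(2) Suc.IH by blast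
  then show ?case using f'(1) unfolding Ck_on.simps(2)[of k] by blast
qed

lemma Ck_add: "Ck_on k S f \<Longrightarrow> Ck_on k S g \<Longrightarrow> Ck_on k S (\<lambda>x. f x + g x)"
proof (induction k arbitrary: f g)
  case 0 then show ?case unfolding Ck_on.simps by (intro continuous_on_add)
next
  case (Suc k)
  obtain f' where f': "\<forall>x\<in>S. (f has_derivative f' x) (at x)" "\<forall>w. Ck_on k S (\<lambda>x. f' x w)"
    using Suc.prems(1) unfolding Ck_on.simps by blast
  obtain g' where g': "\<forall>x\<in>S. (g has_derivative g' x) (at x)" "\<forall>w. Ck_on k S (\<lambda>x. g' x w)"
    using Suc.prems(2) unfolding Ck_on.simps by blast
  show ?case
    apply (rule Ck_on.simps(2)[THEN iffD2])
    apply (rule exI[of _ "\<lambda>x w. f' x w + g' x w"])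
  proof (intro conjI ballI allI)
    fix x assume "x \<in> S"
    then show "((\<lambda>x. f x + g x) has_derivative (\<lambda>w. f' x w + g' x w)) (at x)"
      using f'(1) g'(1) by (intro has_derivative_add) auto
  next
    fix w
    show "Ck_on k S (\<lambda>x. f' x w + g' x w)"
      by (rule Suc.IH[OF f'(2)[rule_format] g'(2)[rule_format]])
  qed
qed

lemma Ck_mult: "Ck_on k S f \<Longrightarrow> Ck_on k S g \<Longrightarrow> Ck_on k S (\<lambda>x. f x * g x)"
proof (induction k arbitrary: f g)
  case 0 then show ?case unfolding Ck_on.simps by (intro continuous_on_mult)
next
  case (Suc k)
  obtain f' where f': "\<forall>x\<in>S. (f has_derivative f' x) (at x)" "\<forall>w. Ck_on k S (\<lambda>x. f' x w)"
    using Suc.prems(1) unfolding Ck_on.simps by blast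
  obtain g' where g': "\<forall>x\<in>S. (g has_derivative g' x) (at x)" "\<forall>w. Ck_on k S (\<lambda>x. g' x w)"
    using Suc.prems(2) unfolding Ck_on.simps by blast
  have fk: "Ck_on k S f" "Ck_on k S g"
    by (rule Ck_mono[OF Suc.prems(1)], rule Ck_mono[OF Suc.prems(2)])
  show ?case
    apply (rule Ck_on.simps(2)[THEN iffD2])
    apply (rule exI[of _ "\<lambda>x w. f x * g' x w + f' x w * g x"])
  proof (intro conjI ballI allI)
    fix x assume "x \<in> S"
    then show "((\<lambda>x. f x * g x) has_derivative (\<lambda>w. f x * g' x w + f' x w * g x)) (at x)"
      using f'(1) g'(1) by (intro has_derivative_mult) auto
  next
    fix w
    have "Ck_on k S (\<lambda>x. f x * g' x w)" by (rule Suc.IH[OF fk(1) g'(2)[rule_format]])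
    moreover have "Ck_on k S (\<lambda>x. f' x w * g x)" by (rule Suc.IH[OF f'(2)[rule_format] fk(2)])
    ultimately show "Ck_on k S (\<lambda>x. f x * g' x w + f' x w * g x)"
      by (rule Ck_add)
  qed
qed

lemma Ck_minus: "Ck_on k S f \<Longrightarrow> Ck_on k S g \<Longrightarrow> Ck_on k S (\<lambda>x. f x - g x)"
proof -
  assume "Ck_on k S f" "Ck_on k S g"
  then have "Ck_on k S (\<lambda>x. f x + (-1) * g x)" by (intro Ck_add Ck_mult Ck_const)
  then show ?thesis by simp
qed

lemma Ck_divc: "Ck_on k S f \<Longrightarrow> Ck_on k S (\<lambda>x. f x / c)"
proof -
  assume "Ck_on k S f"
  then have "Ck_on k S (\<lambda>x. f x * (1/c))" by (intro Ck_mult Ck_const)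
  then show ?thesis by simp
qed

lemma Ck_power: "Ck_on k S f \<Longrightarrow> Ck_on k S (\<lambda>x. f x ^ n)"
  by (induction n) (auto intro: Ck_mult Ck_const)

lemmas Ck_intros = Ck_const Ck_fst Ck_snd Ck_add Ck_minus Ck_mult Ck_divc Ck_power

lemma test_functionI: "(\<And>k. Ck_on k UNIV f) \<Longrightarrow> test_function f"
  unfolding test_function_def smooth_on_def by auto

lemma "Ck_on k UNIV (\<lambda>z. 7 * snd z)"
  apply (rule Ck_mult)
  apply (rule Ck_const)
  apply (rule Ck_snd)
  done

lemma "Ck_on k UNIV (\<lambda>z. 7 * snd z)"
  by (intro Ck_intros)




lemma deriv_line:
  assumes D: "(\<phi> has_derivative D) (at (t,h))"
  shows "((\<lambda>r. \<phi> (t, h + r)) has_real_derivative D (0,1)) (at 0)"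
proof -
  have l: "((\<lambda>r::real. (t, h + r)) has_derivative (\<lambda>r. (0, r))) (at 0)"
    by (auto intro!: derivative_eq_intros)
  have D0: "(\<phi> has_derivative D) (at ((\<lambda>r::real. (t, h + r)) 0))" using D by simp
  have d1: "((\<lambda>r. \<phi> (t, h + r)) has_derivative (\<lambda>r. D (0, r))) (at 0)"
    using has_derivative_compose[OF l D0] by (simp add: o_def)
  have eq: "(\<lambda>r. D (0, r)) = (*) (D (0,1))"
  proof
    fix r :: real
    have bl: "linear D" using has_derivative_linear[OF D] .
    have "D (0, r) = D (r *\<^sub>R (0,1))" by simp
    also have "\<dots> = r *\<^sub>R D (0,1)" using linear_scale[OF bl] by blast
    finally show "D (0, r) = D (0,1) * r" by simp
  qed
  show ?thesis unfolding has_field_derivative_def by (subst eq[symmetric]) (rule d1)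
qed

lemma deriv_bound_max:
  assumes D: "(\<phi> has_derivative D) (at (t,h))" and t: "t > 0" and h: "h \<ge> 0"
    and lm: "local_max_at (\<lambda>y. u y - \<phi> y) (t,h)"
    and lip: "\<And>h h'. h \<ge> 0 \<Longrightarrow> h' \<ge> 0 \<Longrightarrow> \<bar>u (t,h) - u (t,h')\<bar> \<le> L * \<bar>h - h'\<bar>"
  shows "D (0,1) \<ge> - L" and "h > 0 \<Longrightarrow> D (0,1) \<le> L"
proof -
  obtain e where e: "e > 0" "\<And>y. y \<in> test_dom \<Longrightarrow> dist y (t,h) < e \<Longrightarrow> u y - \<phi> y \<le> u (t,h) - \<phi> (t,h)"
    using lm unfolding local_max_at_def by blast
  define g where "g = (\<lambda>r. \<phi> (t, h + r))"
  have gd: "(g has_real_derivative D (0,1)) (at 0)" unfolding g_def by (rule deriv_line[OF D])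
  then have lim: "((\<lambda>r. (g (0 + r) - g 0) / r) \<longlongrightarrow> D (0,1)) (at 0)"
    using DERIV_def by blast
  have key: "g r - g 0 \<ge> - L * \<bar>r\<bar>" if "\<bar>r\<bar> < e" "h + r \<ge> 0" for r
  proof -
    have "(t, h + r) \<in> test_dom" using t that unfolding test_dom_def by auto
    moreover have "dist (t, h + r) (t, h) < e" using that by (simp add: dist_prod_def dist_real_def)
    ultimately have "u (t, h+r) - \<phi> (t, h+r) \<le> u (t,h) - \<phi> (t,h)" using e by blast
    moreover have "\<bar>u (t,h+r) - u (t,h)\<bar> \<le> L * \<bar>(h+r) - h\<bar>" using lip[OF that(2) h] .
    ultimately show ?thesis unfolding g_def by auto
  qed
  show "D (0,1) \<ge> - L"
  proof (rule tendsto_lowerbound)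
    show "((\<lambda>r. (g (0 + r) - g 0) / r) \<longlongrightarrow> D (0,1)) (at_right 0)"
      using lim by (rule filterlim_mono) (auto simp: at_within_le_at)
    show "\<forall>\<^sub>F r in at_right 0. - L \<le> (g (0 + r) - g 0) / r"
      unfolding eventually_at_right_field
    proof (intro exI[of _ e] conjI allI impI)
      fix r :: real assume r: "0 < r" "r < e"
      then have "g r - g 0 \<ge> - L * r" using key[of r] h by auto
      then show "- L \<le> (g (0 + r) - g 0) / r" using r by (simp add: field_simps)
    qed (use e in auto)
  qed simp
  show "D (0,1) \<le> L" if hp: "h > 0"
  proof (rule tendsto_upperbound)
    show "((\<lambda>r. (g (0 + r) - g 0) / r) \<longlongrightarrow> D (0,1)) (at_left 0)"
      using lim by (rule filterlim_mono) (auto simp: at_within_le_at)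
    show "\<forall>\<^sub>F r in at_left 0. (g (0 + r) - g 0) / r \<le> L"
      unfolding eventually_at_left_field
    proof (intro exI[of _ "- min e h"] conjI allI impI)
      fix r :: real assume r: "- min e h < r" "r < 0"
      then have "g r - g 0 \<ge> - L * \<bar>r\<bar>" using key[of r] h by auto
      then have "g r - g 0 \<ge> L * r" using r by simp
      then show "(g (0 + r) - g 0) / r \<le> L" using r by (simp add: field_simps)
    qed (use e hp in auto)
  qed simp
qed

lemma deriv_bound_min:
  assumes D: "(\<phi> has_derivative D) (at (t,h))" and t: "t > 0" and h: "h \<ge> 0"
    and lm: "local_min_at (\<lambda>y. u y - \<phi> y) (t,h)"
    and lip: "\<And>h h'. h \<ge> 0 \<Longrightarrow> h' \<ge> 0 \<Longrightarrow> \<bar>u (t,h) - u (t,h')\<bar> \<le> L * \<bar>h - h'\<bar>"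
  shows "D (0,1) \<le> L" and "h > 0 \<Longrightarrow> D (0,1) \<ge> - L"
proof -
  have D': "((\<lambda>y. - \<phi> y) has_derivative (\<lambda>w. - D w)) (at (t,h))"
    using D by (rule has_derivative_minus)
  have lm': "local_max_at (\<lambda>y. (- u y) - (- \<phi> y)) (t,h)"
  proof -
    obtain e where e: "e > 0" "\<And>y. y \<in> test_dom \<Longrightarrow> dist y (t,h) < e \<Longrightarrow> u (t,h) - \<phi> (t,h) \<le> u y - \<phi> y"
      using lm unfolding local_min_at_def by blast
    show ?thesis unfolding local_max_at_def
    proof (intro exI[of _ e] conjI ballI impI)
      fix y assume "y \<in> test_dom" "dist y (t,h) < e"
      then show "(- u y) - (- \<phi> y) \<le> (- u (t,h)) - (- \<phi> (t,h))" using e(2)[of y] by linarith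
    qed (rule e(1))
  qed
  have lip': "\<And>h h'. h \<ge> 0 \<Longrightarrow> h' \<ge> 0 \<Longrightarrow> \<bar>(- u (t,h)) - (- u (t,h'))\<bar> \<le> L * \<bar>h - h'\<bar>"
    using lip by (metis abs_minus_commute minus_diff_eq minus_diff_minus)
  have "- D (0,1) \<ge> - L" using deriv_bound_max(1)[OF D' t h lm' lip'] .
  then show "D (0,1) \<le> L" by simp
  show "D (0,1) \<ge> - L" if "h > 0" using deriv_bound_max(2)[OF D' t h lm' lip' that] by simp
qed




definition Th :: "real \<Rightarrow> nat \<Rightarrow> real \<Rightarrow> real \<Rightarrow> real" where
  "Th lam N t h = lam * (1 + h^2) * (1 + t)^N"
definition Tht :: "real \<Rightarrow> nat \<Rightarrow> real \<Rightarrow> real \<Rightarrow> real" where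
  "Tht lam N t h = lam * real N * (1 + h^2) * (1 + t)^(N - 1)"
definition Thh :: "real \<Rightarrow> nat \<Rightarrow> real \<Rightarrow> real \<Rightarrow> real" where
  "Thh lam N t h = 2 * lam * h * (1 + t)^N"

lemma Th_deriv:
  "((\<lambda>z. lam * (1 + (snd z)^2) * (1 + fst z)^N) has_derivative
     (\<lambda>w. Tht lam N t h * fst w + Thh lam N t h * snd w)) (at (t,h))"
  unfolding Tht_def Thh_def
  apply (rule derivative_eq_intros refl | simp)+
  apply (auto simp: algebra_simps)
  done


definition Phi :: "(real \<times> real \<Rightarrow> real) \<Rightarrow> (real \<times> real \<Rightarrow> real) \<Rightarrow> real \<Rightarrow> real \<Rightarrow> real \<Rightarrow> nat
   \<Rightarrow> real \<Rightarrow> real \<Rightarrow> real \<Rightarrow> real \<Rightarrow> real" where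
  "Phi u v eps gam lam N t h s k = u (t,h) - v (s,k) - (t - s)^2 / (2*eps) - (h - k)^2 / (2*eps)
     + gam * (h + k) - Th lam N t h - Th lam N s k"

lemma Th_key:
  assumes "0 \<le> t" "t \<le> T" "h \<ge> 0" "lam > 0" "L \<ge> 0" "real N \<ge> 8 * L * (1 + T)" "N \<ge> 1"
  shows "Tht lam N t h \<ge> 4 * L * Thh lam N t h + lam * real N / 2"
proof -
  define P where "P = (1 + t)^(N - 1)"
  have P1: "P \<ge> 1" unfolding P_def using assms(1) by simp
  have pN: "(1 + t)^N = (1 + t) * P" unfolding P_def using assms(7)
    by (metis Suc_diff_1 less_le_trans power_Suc zero_less_one)
  have "4 * L * Thh lam N t h = (8 * L * (1 + t)) * (lam * h * P)"
    unfolding Thh_def pN by (simp add: algebra_simps)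
  also have "\<dots> \<le> real N * (lam * h * P)"
  proof (rule mult_right_mono)
    have "8 * L * (1 + t) \<le> 8 * L * (1 + T)" using assms by (intro mult_left_mono) auto
    then show "8 * L * (1 + t) \<le> real N" using assms(6) by linarith
    show "0 \<le> lam * h * P" using assms P1 by simp
  qed
  also have "\<dots> \<le> real N * (lam * ((1 + h^2)/2) * P)"
  proof -
    have "h \<le> (1 + h^2)/2" using sum_squares_ge_zero[of "h - 1" 0] by (simp add: power2_eq_square algebra_simps)
    then show ?thesis using assms P1 by (intro mult_left_mono mult_right_mono) auto
  qed
  finally have a: "4 * L * Thh lam N t h \<le> Tht lam N t h / 2"
    unfolding Tht_def P_def by (simp add: algebra_simps)
  have "lam * real N * 1 \<le> lam * real N * ((1 + h^2) * P)"
  proof (rule mult_left_mono)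
    have "1 * 1 \<le> (1 + h^2) * P" using P1 by (intro mult_mono) auto
    then show "1 \<le> (1 + h^2) * P" by simp
  qed (use assms in auto)
  then have "lam * real N \<le> Tht lam N t h" unfolding Tht_def P_def by (simp add: algebra_simps)
  with a show ?thesis by linarith
qed

lemma poly2_deriv:
  "((\<lambda>z::real\<times>real. c0 + c1 * ((fst z - a)^2 + (snd z - b)^2) + c2 * snd z) has_derivative
     (\<lambda>w. (2 * c1 * (t - a)) * fst w + (2 * c1 * (h - b) + c2) * snd w)) (at (t,h))"
proof -
  have f1: "((\<lambda>z::real\<times>real. fst z - a) has_derivative (\<lambda>w. fst w - 0)) (at (t,h))"
    by (intro has_derivative_diff has_derivative_fst has_derivative_ident has_derivative_const)
  have f2: "((\<lambda>z::real\<times>real. snd z - b) has_derivative (\<lambda>w. snd w - 0)) (at (t,h))"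
    by (intro has_derivative_diff has_derivative_snd has_derivative_ident has_derivative_const)
  have f3: "((\<lambda>z::real\<times>real. snd z) has_derivative (\<lambda>w. snd w)) (at (t,h))"
    by (intro has_derivative_snd has_derivative_ident)
  have g: "((\<lambda>z::real\<times>real. c0 + c1 * ((fst z - a)^2 + (snd z - b)^2) + c2 * snd z) has_derivative
     (\<lambda>w. 0 + c1 * (of_nat 2 * (fst w - 0) * (fst (t,h) - a)^(2-1) + of_nat 2 * (snd w - 0) * (snd (t,h) - b)^(2-1)) + c2 * snd w)) (at (t,h))"
    by (intro has_derivative_add has_derivative_const has_derivative_mult_right has_derivative_power f1 f2 f3)
  show ?thesis
    by (rule has_derivative_eq_rhs[OF g]) (auto simp: algebra_simps)
qed

lemma lemmaA:
  assumes sub: "viscosity_subsolution u" and super: "viscosity_supersolution v"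
    and lipu: "\<And>t h h'. t \<ge> 0 \<Longrightarrow> h \<ge> 0 \<Longrightarrow> h' \<ge> 0 \<Longrightarrow> \<bar>u (t,h) - u (t,h')\<bar> \<le> L * \<bar>h - h'\<bar>"
    and lipv: "\<And>t h h'. t \<ge> 0 \<Longrightarrow> h \<ge> 0 \<Longrightarrow> h' \<ge> 0 \<Longrightarrow> \<bar>v (t,h) - v (t,h')\<bar> \<le> L * \<bar>h - h'\<bar>"
    and L: "L > 0" and eps: "eps > 0" and lam: "lam > 0" and gam: "gam > 0"
    and N1: "N \<ge> 1" and NT: "real N \<ge> 8 * L * (1 + T)" and gl: "8 * L * gam < lam * real N"
    and t: "0 < t" "t < T" and s: "0 < s" "s < T" and h: "h \<ge> 0" and k: "k \<ge> 0"
    and mx: "\<And>t' h' s' k'. 0 \<le> t' \<Longrightarrow> t' \<le> T \<Longrightarrow> 0 \<le> s' \<Longrightarrow> s' \<le> T \<Longrightarrow> h' \<ge> 0 \<Longrightarrow> k' \<ge> 0 \<Longrightarrow>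
              Phi u v eps gam lam N t' h' s' k' \<le> Phi u v eps gam lam N t h s k"
  shows False
proof -
  define a where "a = (t - s) / eps"
  define A where "A = a + Tht lam N t h"
  define P where "P = (h - k) / eps - gam + Thh lam N t h"
  define B where "B = a - Tht lam N s k"
  define Q where "Q = (h - k) / eps + gam - Thh lam N s k"
  define c1 where "c1 = 1 / (2 * eps)"
  define \<phi>u where "\<phi>u = (\<lambda>z::real\<times>real. (v (s,k) - gam * k + Th lam N s k) + c1 * ((fst z - s)^2 + (snd z - k)^2)
      + (- gam) * snd z + lam * (1 + (snd z)^2) * (1 + fst z)^N)"
  define \<phi>v where "\<phi>v = (\<lambda>z::real\<times>real. (u (t,h) + gam * h - Th lam N t h) + (- c1) * ((fst z - t)^2 + (snd z - h)^2)
      + gam * snd z - lam * (1 + (snd z)^2) * (1 + fst z)^N)"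
  define Du where "Du = (\<lambda>w::real\<times>real. A * fst w + P * snd w)"
  define Dv where "Dv = (\<lambda>w::real\<times>real. B * fst w + Q * snd w)"
  have tfu: "test_function \<phi>u" unfolding \<phi>u_def by (intro test_functionI Ck_intros)
  have tfv: "test_function \<phi>v" unfolding \<phi>v_def by (intro test_functionI Ck_intros)
  have du: "(\<phi>u has_derivative Du) (at (t,h))"
  proof -
    have "(\<phi>u has_derivative (\<lambda>w. ((2 * c1 * (t - s)) * fst w + (2 * c1 * (h - k) + - gam) * snd w)
       + (Tht lam N t h * fst w + Thh lam N t h * snd w))) (at (t,h))"
      unfolding \<phi>u_def by (intro has_derivative_add poly2_deriv Th_deriv)
    then show ?thesis
      by (rule has_derivative_eq_rhs) (use eps in \<open>auto simp: Du_def A_def P_def a_def c1_def field_simps\<close>)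
  qed
  have dv: "(\<phi>v has_derivative Dv) (at (s,k))"
  proof -
    have "(\<phi>v has_derivative (\<lambda>w. ((2 * (- c1) * (s - t)) * fst w + (2 * (- c1) * (k - h) + gam) * snd w)
       - (Tht lam N s k * fst w + Thh lam N s k * snd w))) (at (s,k))"
      unfolding \<phi>v_def by (intro has_derivative_diff poly2_deriv Th_deriv)
    then show ?thesis
      by (rule has_derivative_eq_rhs) (use eps in \<open>auto simp: Dv_def B_def Q_def a_def c1_def field_simps\<close>)
  qed
  have Phi_eq: "Phi u v eps gam lam N t' h' s' k' = u (t',h') - v (s',k') - c1 * ((t' - s')^2 + (h' - k')^2)
     + gam * (h' + k') - Th lam N t' h' - Th lam N s' k'" for t' h' s' k'
    unfolding Phi_def c1_def by (simp add: add_divide_distrib)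
  have lmu: "local_max_at (\<lambda>y. u y - \<phi>u y) (t,h)"
    unfolding local_max_at_def
  proof (intro exI[of _ "T - t"] conjI ballI impI)
    fix y :: "real \<times> real" assume y: "y \<in> test_dom" "dist y (t,h) < T - t"
    obtain t' h' where yy: "y = (t', h')" by (cases y)
    have "\<bar>t' - t\<bar> \<le> dist y (t,h)" using dist_fst_le[of y "(t,h)"] unfolding yy by (simp add: dist_real_def)
    then have "t' \<le> T" using y by linarith
    moreover have "0 \<le> t'" "0 \<le> h'" using y unfolding yy test_dom_def by auto
    ultimately have "Phi u v eps gam lam N t' h' s k \<le> Phi u v eps gam lam N t h s k"
      using t s h k by (intro mx) simp_all
    moreover have "u y - \<phi>u y = Phi u v eps gam lam N t' h' s k"
      unfolding yy \<phi>u_def Phi_eq Th_def by (simp add: algebra_simps)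
    moreover have "u (t,h) - \<phi>u (t,h) = Phi u v eps gam lam N t h s k"
      unfolding \<phi>u_def Phi_eq Th_def by (simp add: algebra_simps)
    ultimately show "u y - \<phi>u y \<le> u (t,h) - \<phi>u (t,h)" by simp
  qed (use t in auto)
  have lmv: "local_min_at (\<lambda>y. v y - \<phi>v y) (s,k)"
    unfolding local_min_at_def
  proof (intro exI[of _ "T - s"] conjI ballI impI)
    fix y :: "real \<times> real" assume y: "y \<in> test_dom" "dist y (s,k) < T - s"
    obtain s' k' where yy: "y = (s', k')" by (cases y)
    have "\<bar>s' - s\<bar> \<le> dist y (s,k)" using dist_fst_le[of y "(s,k)"] unfolding yy by (simp add: dist_real_def)
    then have "s' \<le> T" using y by linarith
    moreover have "0 \<le> s'" "0 \<le> k'" using y unfolding yy test_dom_def by auto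
    ultimately have "Phi u v eps gam lam N t h s' k' \<le> Phi u v eps gam lam N t h s k"
      using t s h k by (intro mx) simp_all
    moreover have "v y - \<phi>v y = - Phi u v eps gam lam N t h s' k'"
      unfolding yy \<phi>v_def Phi_eq Th_def by (simp add: algebra_simps power2_commute)
    moreover have "v (s,k) - \<phi>v (s,k) = - Phi u v eps gam lam N t h s k"
      unfolding \<phi>v_def Phi_eq Th_def by (simp add: algebra_simps power2_commute)
    ultimately show "v (s,k) - \<phi>v (s,k) \<le> v y - \<phi>v y" by simp
  qed (use s in auto)
  have Du10: "Du (1,0) = A" and Du01: "Du (0,1) = P" unfolding Du_def by auto
  have Dv10: "Dv (1,0) = B" and Dv01: "Dv (0,1) = Q" unfolding Dv_def by auto
  have subc: "if h > 0 then A - 2 * P\<^sup>2 \<le> 0 else min (- P) (A - 2 * P\<^sup>2) \<le> 0"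
    using sub t h tfu du lmu unfolding viscosity_subsolution_def Du10[symmetric] Du01[symmetric]
    by blast
  have superc: "if k > 0 then B - 2 * Q\<^sup>2 \<ge> 0 else max (- Q) (B - 2 * Q\<^sup>2) \<ge> 0"
    using super s k tfv dv lmv unfolding viscosity_supersolution_def Dv10[symmetric] Dv01[symmetric]
    by blast
  have Pl: "P \<ge> - L" using deriv_bound_max(1)[OF du t(1) h lmu lipu] t Du01 by auto
  have Qu: "Q \<le> L" using deriv_bound_min(1)[OF dv s(1) k lmv lipv] s Dv01 by auto
  have Thh0: "Thh lam N t 0 = 0" "Thh lam N s 0 = 0" unfolding Thh_def by auto
  have ThhP: "Thh lam N t h \<ge> 0" "Thh lam N s k \<ge> 0" unfolding Thh_def using lam h k t s by auto
  have A2: "A \<le> 2 * P\<^sup>2 \<and> P \<le> L"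
  proof (cases "h > 0")
    case True
    then show ?thesis using subc deriv_bound_max(2)[OF du t(1) h lmu lipu] t Du01 by auto
  next
    case False
    then have "h = 0" using h by auto
    moreover have "k / eps \<ge> 0" using k eps by simp
    ultimately have "P < 0" unfolding P_def using Thh0 gam by simp
    then show ?thesis using subc False L by auto
  qed
  have B2: "B \<ge> 2 * Q\<^sup>2 \<and> Q \<ge> - L"
  proof (cases "k > 0")
    case True
    then show ?thesis using superc deriv_bound_min(2)[OF dv s(1) k lmv lipv] s Dv01 by auto
  next
    case False
    then have "k = 0" using k by auto
    moreover have "h / eps \<ge> 0" using h eps by simp
    ultimately have "Q > 0" unfolding Q_def using Thh0 gam by simp
    then show ?thesis using superc False L by auto
  qed
  have k1: "Tht lam N t h \<ge> 4 * L * Thh lam N t h + lam * real N / 2"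
    using t h lam L NT N1 by (intro Th_key) auto
  have k2: "Tht lam N s k \<ge> 4 * L * Thh lam N s k + lam * real N / 2"
    using s k lam L NT N1 by (intro Th_key) auto
  have "Tht lam N t h + Tht lam N s k \<le> 2 * (P - Q) * (P + Q)"
    using A2 B2 unfolding A_def B_def by (simp add: power2_eq_square algebra_simps)
  also have "\<dots> \<le> 2 * \<bar>P - Q\<bar> * \<bar>P + Q\<bar>"
    by (metis abs_ge_self abs_mult mult.assoc mult_left_mono zero_le_numeral)
  also have "\<dots> \<le> 2 * \<bar>P - Q\<bar> * (2 * L)"
    using A2 B2 Pl Qu by (intro mult_left_mono) auto
  also have "\<bar>P - Q\<bar> \<le> Thh lam N t h + Thh lam N s k + 2 * gam"
    unfolding P_def Q_def using ThhP gam by auto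
  then have "2 * \<bar>P - Q\<bar> * (2 * L) \<le> 2 * (Thh lam N t h + Thh lam N s k + 2 * gam) * (2 * L)"
    using L by (intro mult_right_mono) auto
  finally have "Tht lam N t h + Tht lam N s k \<le> 4 * L * Thh lam N t h + 4 * L * Thh lam N s k + 8 * L * gam"
    by (simp add: algebra_simps)
  with k1 k2 gl show False by linarith
qed




lemma quad_bound:
  fixes b c x :: real
  assumes "b > 0"
  shows "c * x - b * x^2 \<le> c^2 / (4 * b)"
proof -
  have "0 \<le> (c - 2 * b * x)^2" by simp
  then have "4 * b * (c * x - b * x^2) \<le> c^2" by (simp add: power2_eq_square algebra_simps)
  then show ?thesis using assms by (simp add: field_simps mult.commute)
qed

lemma quad_eventually:
  fixes b c d :: real
  assumes "b > 0"
  shows "\<exists>B. \<forall>x\<ge>B. c * x - b * x^2 < d"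
proof (intro exI allI impI)
  fix x :: real
  assume x: "max 1 ((\<bar>c\<bar> + \<bar>d\<bar> + 1) / b) \<le> x"
  then have x1: "x \<ge> 1" and "(\<bar>c\<bar> + \<bar>d\<bar> + 1) / b \<le> x" by auto
  then have bx: "\<bar>c\<bar> + \<bar>d\<bar> + 1 \<le> b * x" using assms by (simp add: field_simps)
  have "(\<bar>c\<bar> + \<bar>d\<bar> + 1) * x \<le> (b * x) * x" using bx x1 by (intro mult_right_mono) auto
  moreover have "\<bar>c\<bar> * x + \<bar>d\<bar> + 1 \<le> (\<bar>c\<bar> + \<bar>d\<bar> + 1) * x"
  proof -
    have "(\<bar>d\<bar> + 1) * 1 \<le> (\<bar>d\<bar> + 1) * x" using x1 by (intro mult_left_mono) auto
    then show ?thesis by (simp add: algebra_simps)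
  qed
  moreover have "c * x \<le> \<bar>c\<bar> * x" using x1 by (intro mult_right_mono) auto
  ultimately show "c * x - b * x^2 < d" by (simp add: power2_eq_square)
qed


lemma Th_ge: "lam > 0 \<Longrightarrow> t \<ge> 0 \<Longrightarrow> Th lam N t h \<ge> lam * (1 + h^2)"
proof -
  assume "lam > 0" "t \<ge> 0"
  then have "lam * (1 + h^2) * 1 \<le> lam * (1 + h^2) * (1 + t)^N"
    by (intro mult_left_mono) auto
  then show ?thesis unfolding Th_def by simp
qed

lemma lemmaB:
  assumes sub: "viscosity_subsolution u" and super: "viscosity_supersolution v"
    and lipu: "\<And>t h h'. t \<ge> 0 \<Longrightarrow> h \<ge> 0 \<Longrightarrow> h' \<ge> 0 \<Longrightarrow> \<bar>u (t,h) - u (t,h')\<bar> \<le> L * \<bar>h - h'\<bar>"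
    and lipv: "\<And>t h h'. t \<ge> 0 \<Longrightarrow> h \<ge> 0 \<Longrightarrow> h' \<ge> 0 \<Longrightarrow> \<bar>v (t,h) - v (t,h')\<bar> \<le> L * \<bar>h - h'\<bar>"
    and L: "L \<ge> 1"
    and bd: "\<And>h. h \<ge> 0 \<Longrightarrow> u (0,h) - v (0,h) \<le> M0"
    and t0: "t0 \<ge> 0" and h0: "h0 \<ge> 0" and gt: "u (t0,h0) - v (t0,h0) > M0"
  shows False
proof -
  define \<eta> where "\<eta> = min (u (t0,h0) - v (t0,h0) - M0) 1"
  have \<eta>: "\<eta> > 0" "\<eta> \<le> 1" "u (t0,h0) - v (t0,h0) \<ge> M0 + \<eta>" unfolding \<eta>_def using gt by auto
  define T where "T = t0 + 1"
  have T: "T > 0" "t0 < T" unfolding T_def using t0 by auto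
  have cu: "continuous_on quadrant u" using sub unfolding viscosity_subsolution_def by blast
  have cv: "continuous_on quadrant v" using super unfolding viscosity_supersolution_def by blast
  have c0: "continuous_on {0..T} (\<lambda>t::real. (t, 0::real))" by (intro continuous_intros)
  have im0: "(\<lambda>t::real. (t, 0::real)) ` {0..T} \<subseteq> quadrant" unfolding quadrant_def by auto
  have cu0: "continuous_on {0..T} (\<lambda>t. u (t, 0))" by (rule continuous_on_compose2[OF cu c0 im0])
  have cv0: "continuous_on {0..T} (\<lambda>t. v (t, 0))" by (rule continuous_on_compose2[OF cv c0 im0])
  obtain tu where "tu \<in> {0..T}" and Au: "\<And>t. t \<in> {0..T} \<Longrightarrow> u (t,0) \<le> u (tu,0)"
    using continuous_attains_sup[OF compact_Icc _ cu0] T by auto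
  obtain tv where "tv \<in> {0..T}" and Av: "\<And>t. t \<in> {0..T} \<Longrightarrow> v (tv,0) \<le> v (t,0)"
    using continuous_attains_inf[OF compact_Icc _ cv0] T by auto
  define A0 where "A0 = u (tu,0) - v (tv,0)"
  have bnd1: "u (t,h) - v (s,k) \<le> A0 + L * h + L * k"
    if "0 \<le> t" "t \<le> T" "0 \<le> s" "s \<le> T" "h \<ge> 0" "k \<ge> 0" for t h s k
  proof -
    have "u (t,h) - u (t,0) \<le> L * h" using lipu[of t h 0] that by auto
    moreover have "v (s,0) - v (s,k) \<le> L * k" using lipv[of s 0 k] that by auto
    moreover have "u (t,0) \<le> u (tu,0)" "v (tv,0) \<le> v (s,0)" using Au Av that by auto
    ultimately show ?thesis unfolding A0_def by linarith
  qed
  have bnd2: "u (t,h) - v (s,k) \<le> A0 + 2 * L * h + L * \<bar>h - k\<bar>"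
    if "0 \<le> t" "t \<le> T" "0 \<le> s" "s \<le> T" "h \<ge> 0" "k \<ge> 0" for t h s k
  proof -
    have "u (t,h) - u (t,0) \<le> L * h" using lipu[of t h 0] that by auto
    moreover have "v (s,0) - v (s,h) \<le> L * h" using lipv[of s 0 h] that by auto
    moreover have "v (s,h) - v (s,k) \<le> L * \<bar>h - k\<bar>" using lipv[of s h k] that by auto
    moreover have "u (t,0) \<le> u (tu,0)" "v (tv,0) \<le> v (s,0)" using Au Av that by auto
    ultimately show ?thesis unfolding A0_def by linarith
  qed
  have bnd3: "u (t,h) - v (s,k) \<le> A0 + 2 * L * k + L * \<bar>h - k\<bar>"
    if "0 \<le> t" "t \<le> T" "0 \<le> s" "s \<le> T" "h \<ge> 0" "k \<ge> 0" for t h s k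
  proof -
    have "u (t,h) - u (t,k) \<le> L * \<bar>h - k\<bar>" using lipu[of t h k] that by auto
    moreover have "u (t,k) - u (t,0) \<le> L * k" using lipu[of t k 0] that by auto
    moreover have "v (s,0) - v (s,k) \<le> L * k" using lipv[of s 0 k] that by auto
    moreover have "u (t,0) \<le> u (tu,0)" "v (tv,0) \<le> v (s,0)" using Au Av that by auto
    ultimately show ?thesis unfolding A0_def by linarith
  qed
  define r where "r = (1 + T) / (1 + t0)"
  have r1: "r > 1" unfolding r_def using T t0 by simp
  define K\<mu> where "K\<mu> = \<bar>A0 - M0\<bar> + (2 * L + 1)^2 + 1"
  have K\<mu>1: "K\<mu> \<ge> 1" unfolding K\<mu>_def by simp
  obtain N1 where N1: "4 * (1 + h0^2) * K\<mu> / \<eta> < r ^ N1" using real_arch_pow[OF r1] by blast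
  obtain N2 :: nat where N2: "8 * L * (1 + T) \<le> real N2" using real_arch_simple by blast
  define N where "N = max (max N1 N2) 1"
  have N1': "N \<ge> 1" and NT: "real N \<ge> 8 * L * (1 + T)" unfolding N_def using N2 by auto
  have rN: "r ^ N1 \<le> r ^ N" unfolding N_def using r1 by (intro power_increasing) auto
  define lam where "lam = \<eta> / (4 * (1 + h0^2) * (1 + t0)^N)"
  have pos1: "(1 + h0^2) * (1 + t0)^N \<ge> 1"
  proof -
    have "1 * 1 \<le> (1 + h0^2) * (1 + t0)^N" using t0 by (intro mult_mono) auto
    then show ?thesis by simp
  qed
  have lam: "lam > 0" unfolding lam_def using \<eta> t0 by (simp add: add_pos_nonneg)
  have lam_le: "lam \<le> \<eta> / 4"
  proof -
    have "(\<eta> / 4) / ((1 + h0^2) * (1 + t0)^N) \<le> (\<eta> / 4) / 1"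
      using \<eta> pos1 by (intro divide_left_mono) auto
    moreover have "lam = (\<eta> / 4) / ((1 + h0^2) * (1 + t0)^N)"
      unfolding lam_def by (simp add: divide_divide_eq_left mult.assoc)
    ultimately show ?thesis by simp
  qed
  have lamX: "lam = (\<eta> / 4) / ((1 + h0^2) * (1 + t0)^N)"
    unfolding lam_def by (simp add: divide_divide_eq_left mult.assoc)
  have Th0: "Th lam N t0 h0 = \<eta> / 4"
  proof -
    have "(1 + h0^2) * (1 + t0)^N \<noteq> 0" using pos1 by linarith
    then show ?thesis unfolding Th_def lamX by (simp add: mult.assoc)
  qed
  define \<mu> where "\<mu> = lam * (1 + T)^N"
  have \<mu>eq: "\<mu> = \<eta> / (4 * (1 + h0^2)) * r ^ N"
    unfolding \<mu>_def lam_def r_def using t0 T by (simp add: power_divide field_simps add_pos_nonneg)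
  have \<mu>K: "\<mu> \<ge> K\<mu>"
  proof -
    have "4 * (1 + h0^2) * K\<mu> / \<eta> < r ^ N" using N1 rN by linarith
    then have "4 * (1 + h0^2) * K\<mu> < \<eta> * r ^ N" using \<eta> by (simp add: field_simps)
    then show ?thesis unfolding \<mu>eq using \<eta> by (simp add: field_simps add_pos_nonneg)
  qed
  have ThT: "Th lam N T h = \<mu> * (1 + h^2)" for h unfolding Th_def \<mu>_def by simp
  define gam where "gam = lam / (16 * L)"
  have gam: "gam > 0" "gam \<le> lam" "8 * L * gam < lam * real N"
  proof -
    show "gam > 0" unfolding gam_def using lam L by simp
    show "gam \<le> lam" unfolding gam_def using lam L by (simp add: field_simps)
    have "8 * L * gam = lam / 2" unfolding gam_def using L by simp
    also have "\<dots> < lam * real N" using lam N1' by (simp add: field_simps)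
    finally show "8 * L * gam < lam * real N" .
  qed
  have gam1: "gam \<le> 1" using gam lam_le \<eta> by linarith
  define c where "c = L + gam"
  obtain B1 where B1: "\<And>x. x \<ge> B1 \<Longrightarrow> c * x - lam * x^2 < M0 + \<eta> / 2 - A0 - c^2 / (4 * lam)"
    using quad_eventually[OF lam] by blast
  define B where "B = max (max B1 h0) 0"
  have B: "B \<ge> h0" "B \<ge> 0" "B \<ge> B1" unfolding B_def by auto
  define Kc where "Kc = A0 + c^2 / (2 * lam) - (M0 + \<eta> / 2)"
  define C where "C = {0..T} \<times> {0..B}"
  have Cq: "C \<subseteq> quadrant" unfolding C_def quadrant_def by auto
  have ucu: "uniformly_continuous_on C u"
    by (rule compact_uniformly_continuous[OF continuous_on_subset[OF cu Cq]]) (simp add: C_def compact_Times)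
  have ucv: "uniformly_continuous_on C v"
    by (rule compact_uniformly_continuous[OF continuous_on_subset[OF cv Cq]]) (simp add: C_def compact_Times)
  obtain \<rho>u where \<rho>u: "\<rho>u > 0" "\<And>x x'. x \<in> C \<Longrightarrow> x' \<in> C \<Longrightarrow> dist x' x < \<rho>u \<Longrightarrow> dist (u x') (u x) < \<eta> / 8"
  proof -
    have "\<eta> / 8 > 0" using \<eta> by simp
    from ucu[unfolded uniformly_continuous_on_def, rule_format, OF this] show ?thesis using that by blast
  qed
  obtain \<rho>v where \<rho>v: "\<rho>v > 0" "\<And>x x'. x \<in> C \<Longrightarrow> x' \<in> C \<Longrightarrow> dist x' x < \<rho>v \<Longrightarrow> dist (v x') (v x) < \<eta> / 8"
  proof -
    have "\<eta> / 8 > 0" using \<eta> by simp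
    from ucv[unfolded uniformly_continuous_on_def, rule_format, OF this] show ?thesis using that by blast
  qed
  define \<rho> where "\<rho> = min \<rho>u \<rho>v"
  have \<rho>: "\<rho> > 0" "\<rho> \<le> \<rho>u" "\<rho> \<le> \<rho>v" unfolding \<rho>_def using \<rho>u \<rho>v by auto
  define eps where "eps = min (\<eta> / (4 * L^2)) (\<rho>^2 / (4 * (\<bar>Kc\<bar> + 1)))"
  have eps: "eps > 0" unfolding eps_def using \<eta> L \<rho> by (simp add: add_pos_nonneg)
  have epsL: "L^2 * eps / 2 \<le> \<eta> / 8"
  proof -
    have "eps \<le> \<eta> / (4 * L^2)" unfolding eps_def by simp
    then have "L^2 * eps \<le> L^2 * (\<eta> / (4 * L^2))" by (intro mult_left_mono) auto
    then show ?thesis using L by (simp add: field_simps)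
  qed
  have epsK: "2 * eps * (\<bar>Kc\<bar> + 1) < \<rho>^2"
  proof -
    have "eps \<le> \<rho>^2 / (4 * (\<bar>Kc\<bar> + 1))" unfolding eps_def by simp
    then have "eps * (4 * (\<bar>Kc\<bar> + 1)) \<le> \<rho>^2" by (simp add: field_simps add_pos_nonneg)
    moreover have "eps * (\<bar>Kc\<bar> + 1) > 0" using eps by (simp add: add_pos_nonneg)
    ultimately show ?thesis by (simp add: algebra_simps)
  qed
  let ?P = "Phi u v eps gam lam N"
  have gen: "?P t h s k \<le> A0 + (c * h - lam * h^2) + (c * k - lam * k^2) - (t - s)^2 / (2 * eps)"
    if "0 \<le> t" "t \<le> T" "0 \<le> s" "s \<le> T" "h \<ge> 0" "k \<ge> 0" for t h s k
  proof -
    have "u (t,h) - v (s,k) \<le> A0 + L * h + L * k" using bnd1 that by blast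
    moreover have "Th lam N t h \<ge> lam * (1 + h^2)" "Th lam N s k \<ge> lam * (1 + k^2)"
      using Th_ge lam that by auto
    moreover have "(h - k)^2 / (2 * eps) \<ge> 0" using eps by simp
    ultimately show ?thesis unfolding Phi_def c_def using lam by (simp add: algebra_simps)
  qed
  have gen2: "?P t h s k \<le> A0 + c^2 / (2 * lam) - (t - s)^2 / (2 * eps)"
    if "0 \<le> t" "t \<le> T" "0 \<le> s" "s \<le> T" "h \<ge> 0" "k \<ge> 0" for t h s k
    using gen[OF that] quad_bound[OF lam, of c h] quad_bound[OF lam, of c k] by (simp add: field_simps)
  have bigh: "?P t h s k < M0 + \<eta> / 2"
    if "0 \<le> t" "t \<le> T" "0 \<le> s" "s \<le> T" "h \<ge> 0" "k \<ge> 0" "h > B \<or> k > B" for t h s k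
  proof -
    have sq: "(t - s)^2 / (2 * eps) \<ge> 0" using eps by simp
    show ?thesis
    proof (cases "h > B")
      case True
      then have "c * h - lam * h^2 < M0 + \<eta> / 2 - A0 - c^2 / (4 * lam)" using B1 B by auto
      then show ?thesis using gen[OF that(1-6)] quad_bound[OF lam, of c k] sq by linarith
    next
      case False
      then have "k > B" using that by auto
      then have "c * k - lam * k^2 < M0 + \<eta> / 2 - A0 - c^2 / (4 * lam)" using B1 B by auto
      then show ?thesis using gen[OF that(1-6)] quad_bound[OF lam, of c h] sq by linarith
    qed
  qed
  have ref: "?P t0 h0 t0 h0 \<ge> M0 + \<eta> / 2"
  proof -
    have "?P t0 h0 t0 h0 = u (t0,h0) - v (t0,h0) + 2 * gam * h0 - 2 * Th lam N t0 h0"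
      unfolding Phi_def by simp
    moreover have "gam * h0 \<ge> 0" using gam h0 by simp
    ultimately show ?thesis using \<eta> Th0 by linarith
  qed
  define K where "K = C \<times> C"
  define F where "F = (\<lambda>p::(real\<times>real)\<times>(real\<times>real). ?P (fst (fst p)) (snd (fst p)) (fst (snd p)) (snd (snd p)))"
  have Kc': "compact K" "K \<noteq> {}" unfolding K_def C_def using T B by (auto simp: compact_Times)
  have Kq: "fst ` K \<subseteq> quadrant" "snd ` K \<subseteq> quadrant" unfolding K_def using Cq by auto
  have cF: "continuous_on K F"
  proof -
    have c1: "continuous_on K (\<lambda>p. u (fst p))"
      by (rule continuous_on_compose2[OF cu continuous_on_fst[OF continuous_on_id] Kq(1)])
    have c2: "continuous_on K (\<lambda>p. v (snd p))"
      by (rule continuous_on_compose2[OF cv continuous_on_snd[OF continuous_on_id] Kq(2)])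
    have "continuous_on K (\<lambda>p. u (fst p) - v (snd p) - (fst (fst p) - fst (snd p))^2 / (2*eps)
       - (snd (fst p) - snd (snd p))^2 / (2*eps) + gam * (snd (fst p) + snd (snd p))
       - lam * (1 + (snd (fst p))^2) * (1 + fst (fst p))^N - lam * (1 + (snd (snd p))^2) * (1 + fst (snd p))^N)"
      using eps by (intro continuous_intros c1 c2) auto
    then show ?thesis unfolding F_def Phi_def Th_def by simp
  qed
  obtain zs where zs: "zs \<in> K" "\<And>p. p \<in> K \<Longrightarrow> F p \<le> F zs"
    using continuous_attains_sup[OF Kc' cF] by blast
  obtain t h s k where zz: "zs = ((t,h),(s,k))" by (metis prod.collapse)
  have rng: "0 \<le> t" "t \<le> T" "0 \<le> s" "s \<le> T" "0 \<le> h" "h \<le> B" "0 \<le> k" "k \<le> B"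
    using zs(1) unfolding zz K_def C_def by auto
  have Fz: "F zs = ?P t h s k" unfolding F_def zz by simp
  have refK: "((t0,h0),(t0,h0)) \<in> K" unfolding K_def C_def using t0 T h0 B by auto
  have Vge: "?P t h s k \<ge> M0 + \<eta> / 2"
    using zs(2)[OF refK] ref unfolding Fz unfolding F_def by simp
  have glob: "?P t' h' s' k' \<le> ?P t h s k"
    if "0 \<le> t'" "t' \<le> T" "0 \<le> s'" "s' \<le> T" "h' \<ge> 0" "k' \<ge> 0" for t' h' s' k'
  proof (cases "h' > B \<or> k' > B")
    case True
    then show ?thesis using bigh[OF that True] Vge by linarith
  next
    case False
    then have "((t',h'),(s',k')) \<in> K" unfolding K_def C_def using that by auto
    from zs(2)[OF this] show ?thesis unfolding Fz unfolding F_def by simp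
  qed
  have ts: "\<bar>t - s\<bar> < \<rho>"
  proof -
    have "(t - s)^2 / (2 * eps) \<le> Kc" using gen2[OF rng(1-4) rng(5) rng(7)] Vge unfolding Kc_def by linarith
    then have "(t - s)^2 \<le> 2 * eps * Kc" using eps by (simp add: field_simps)
    also have "\<dots> \<le> 2 * eps * (\<bar>Kc\<bar> + 1)" using eps by (intro mult_left_mono) auto
    also have "\<dots> < \<rho>^2" by (rule epsK)
    finally have "\<bar>t - s\<bar>^2 < \<rho>^2" by simp
    then show ?thesis using \<rho> power_less_imp_less_base[of "\<bar>t - s\<bar>" 2 \<rho>] by linarith
  qed
  have hk: "L * \<bar>h - k\<bar> - (h - k)^2 / (2 * eps) \<le> \<eta> / 8"
  proof -
    have "L * \<bar>h - k\<bar> - (1 / (2 * eps)) * \<bar>h - k\<bar>^2 \<le> L^2 / (4 * (1 / (2 * eps)))"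
      by (rule quad_bound) (use eps in simp)
    then have "L * \<bar>h - k\<bar> - (h - k)^2 / (2 * eps) \<le> L^2 * eps / 2" by (simp add: field_simps)
    then show ?thesis using epsL by linarith
  qed
  have gk: "gam * x - Th lam N y x \<le> 0" if "x \<ge> 0" "y \<ge> 0" for x y
  proof -
    have "gam * x - lam * x^2 \<le> gam^2 / (4 * lam)" by (rule quad_bound[OF lam])
    also have "\<dots> \<le> lam / 4"
    proof -
      have "gam^2 \<le> lam^2" using gam by (simp add: power_mono)
      then show ?thesis using lam by (simp add: field_simps power2_eq_square)
    qed
    finally have "gam * x - lam * x^2 \<le> lam / 4" .
    moreover have "Th lam N y x \<ge> lam * (1 + x^2)" using Th_ge[OF lam that(2)] .
    ultimately show ?thesis using lam by (simp add: algebra_simps)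
  qed
  have sq0: "(t - s)^2 / (2 * eps) \<ge> 0" using eps by simp
  have PhiE: "?P t h s k = u (t,h) - v (s,k) - (t - s)^2 / (2 * eps) + (gam * h - Th lam N t h)
      + (gam * k - Th lam N s k) - (h - k)^2 / (2 * eps)"
    unfolding Phi_def by (simp add: algebra_simps)
  have lin1: "(2 * L + gam) * h = 2 * L * h + gam * h" "(2 * L + gam) * k = 2 * L * k + gam * k"
    by (simp_all add: algebra_simps)
  have t_pos: "t > 0"
  proof (rule ccontr)
    assume "\<not> t > 0"
    then have t0': "t = 0" using rng by auto
    have "dist (v (s,h)) (v (0,h)) < \<eta> / 8"
      using \<rho>v(2)[of "(0,h)" "(s,h)"] rng ts \<rho> t0' unfolding C_def by (auto simp: dist_prod_def dist_real_def)
    then have "v (t,h) - v (s,h) < \<eta> / 8" unfolding t0' by (simp only: dist_real_def abs_less_iff; linarith)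
    moreover have "u (t,h) - v (t,h) \<le> M0" using bd rng unfolding t0' by auto
    moreover have "v (s,h) - v (s,k) \<le> L * \<bar>h - k\<bar>" using lipv[of s h k] rng by auto
    moreover have "gam * h - Th lam N t h \<le> 0" "gam * k - Th lam N s k \<le> 0" using gk rng by auto
    ultimately have "?P t h s k < M0 + \<eta> / 2"
      using PhiE hk sq0 \<eta> by linarith
    then show False using Vge by linarith
  qed
  have s_pos: "s > 0"
  proof (rule ccontr)
    assume "\<not> s > 0"
    then have s0': "s = 0" using rng by auto
    have "dist (u (t,h)) (u (0,h)) < \<eta> / 8"
      using \<rho>u(2)[of "(0,h)" "(t,h)"] rng ts \<rho> s0' unfolding C_def by (auto simp: dist_prod_def dist_real_def)
    then have "u (t,h) - u (s,h) < \<eta> / 8" unfolding s0' by (simp only: dist_real_def abs_less_iff; linarith)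
    moreover have "u (s,h) - v (s,h) \<le> M0" using bd rng unfolding s0' by auto
    moreover have "v (s,h) - v (s,k) \<le> L * \<bar>h - k\<bar>" using lipv[of s h k] rng by auto
    moreover have "gam * h - Th lam N t h \<le> 0" "gam * k - Th lam N s k \<le> 0" using gk rng by auto
    ultimately have "?P t h s k < M0 + \<eta> / 2"
      using PhiE hk sq0 \<eta> by linarith
    then show False using Vge by linarith
  qed
  have \<mu>1: "\<mu> \<ge> 1" using \<mu>K K\<mu>1 by linarith
  have muq: "(2 * L + gam) * x - Th lam N T x \<le> (2 * L + 1)^2 - \<mu>" if "x \<ge> 0" for x
  proof -
    have \<mu>0: "\<mu> > 0" using \<mu>1 by linarith
    have "(2 * L + gam) * x - \<mu> * x^2 \<le> (2 * L + gam)^2 / (4 * \<mu>)" by (rule quad_bound[OF \<mu>0])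
    also have "\<dots> \<le> (2 * L + 1)^2 / 1"
    proof (rule frac_le)
      show "(2 * L + gam)^2 \<le> (2 * L + 1)^2" using gam gam1 L by (intro power_mono) auto
    qed (use \<mu>1 in auto)
    finally show ?thesis unfolding ThT by (simp add: algebra_simps)
  qed
  have t_lt: "t < T"
  proof (rule ccontr)
    assume "\<not> t < T"
    then have tT: "t = T" using rng by auto
    have "u (t,h) - v (s,k) \<le> A0 + 2 * L * h + L * \<bar>h - k\<bar>" using bnd2 rng by auto
    moreover have "(2 * L + gam) * h - Th lam N t h \<le> (2 * L + 1)^2 - \<mu>" using muq rng tT by auto
    moreover have "gam * k - Th lam N s k \<le> 0" using gk rng by auto
    moreover have "\<mu> \<ge> \<bar>A0 - M0\<bar> + (2 * L + 1)^2 + 1" using \<mu>K unfolding K\<mu>_def .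
    ultimately have "?P t h s k < M0 + \<eta> / 2"
      using PhiE lin1 hk sq0 \<eta> by linarith
    then show False using Vge by linarith
  qed
  have s_lt: "s < T"
  proof (rule ccontr)
    assume "\<not> s < T"
    then have sT: "s = T" using rng by auto
    have "u (t,h) - v (s,k) \<le> A0 + 2 * L * k + L * \<bar>h - k\<bar>" using bnd3 rng by auto
    moreover have "(2 * L + gam) * k - Th lam N s k \<le> (2 * L + 1)^2 - \<mu>" using muq rng sT by auto
    moreover have "gam * h - Th lam N t h \<le> 0" using gk rng by auto
    moreover have "\<mu> \<ge> \<bar>A0 - M0\<bar> + (2 * L + 1)^2 + 1" using \<mu>K unfolding K\<mu>_def .
    ultimately have "?P t h s k < M0 + \<eta> / 2"
      using PhiE lin1 hk sq0 \<eta> by linarith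
    then show False using Vge by linarith
  qed
  show False
    using L eps lam gam N1' NT t_pos t_lt s_pos s_lt rng glob
    by (intro lemmaA[OF sub super lipu lipv, of eps lam gam N T t s h k]) auto
qed


theorem proposition4p2:
  fixes u v :: "real \<times> real \<Rightarrow> real"
  assumes "viscosity_subsolution u"
    and "viscosity_supersolution v"
    and "unif_lipschitz_in_h u"
    and "unif_lipschitz_in_h v"
  shows "(SUP x\<in>quadrant. ereal (u x - v x)) = (SUP h\<in>{0..}. ereal (u (0, h) - v (0, h)))"
proof -
  obtain Lu where Lu: "\<forall>t h h'. t \<ge> 0 \<and> h \<ge> 0 \<and> h' \<ge> 0 \<longrightarrow> \<bar>u (t, h) - u (t, h')\<bar> \<le> Lu * \<bar>h - h'\<bar>"
    using assms(3) unfolding unif_lipschitz_in_h_def by blast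
  obtain Lv where Lv: "\<forall>t h h'. t \<ge> 0 \<and> h \<ge> 0 \<and> h' \<ge> 0 \<longrightarrow> \<bar>v (t, h) - v (t, h')\<bar> \<le> Lv * \<bar>h - h'\<bar>"
    using assms(4) unfolding unif_lipschitz_in_h_def by blast
  define L where "L = max (max Lu Lv) 1"
  have L1: "L \<ge> 1" unfolding L_def by simp
  have lipu: "\<bar>u (t,h) - u (t,h')\<bar> \<le> L * \<bar>h - h'\<bar>" if "t \<ge> 0" "h \<ge> 0" "h' \<ge> 0" for t h h'
  proof -
    have "\<bar>u (t,h) - u (t,h')\<bar> \<le> Lu * \<bar>h - h'\<bar>" using Lu that by blast
    also have "\<dots> \<le> L * \<bar>h - h'\<bar>" by (intro mult_right_mono) (auto simp: L_def)
    finally show ?thesis .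
  qed
  have lipv: "\<bar>v (t,h) - v (t,h')\<bar> \<le> L * \<bar>h - h'\<bar>" if "t \<ge> 0" "h \<ge> 0" "h' \<ge> 0" for t h h'
  proof -
    have "\<bar>v (t,h) - v (t,h')\<bar> \<le> Lv * \<bar>h - h'\<bar>" using Lv that by blast
    also have "\<dots> \<le> L * \<bar>h - h'\<bar>" by (intro mult_right_mono) (auto simp: L_def)
    finally show ?thesis .
  qed
  define R where "R = (SUP h\<in>{0..}. ereal (u (0, h) - v (0, h)))"
  have ge: "R \<le> (SUP x\<in>quadrant. ereal (u x - v x))"
    unfolding R_def
  proof (rule SUP_least)
    fix h :: real assume "h \<in> {0..}"
    then have "(0, h) \<in> quadrant" unfolding quadrant_def by auto
    then show "ereal (u (0, h) - v (0, h)) \<le> (SUP x\<in>quadrant. ereal (u x - v x))"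
      by (rule SUP_upper2) simp
  qed
  have le: "(SUP x\<in>quadrant. ereal (u x - v x)) \<le> R"
  proof (rule SUP_least)
    fix x assume x: "x \<in> quadrant"
    obtain t0 h0 where xx: "x = (t0, h0)" by (cases x)
    have th0: "t0 \<ge> 0" "h0 \<ge> 0" using x unfolding xx quadrant_def by auto
    show "ereal (u x - v x) \<le> R"
    proof (rule ccontr)
      assume "\<not> ereal (u x - v x) \<le> R"
      then have lt: "R < ereal (u x - v x)" by simp
      have R0: "ereal (u (0,0) - v (0,0)) \<le> R" unfolding R_def by (rule SUP_upper2[of 0]) auto
      obtain M0 where M0: "R = ereal M0" using lt R0 by (cases R) auto
      have bd: "u (0,h) - v (0,h) \<le> M0" if "h \<ge> 0" for h
      proof -
        have "ereal (u (0,h) - v (0,h)) \<le> R" unfolding R_def by (rule SUP_upper2[of h]) (use that in auto)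
        then show ?thesis using M0 by simp
      qed
      have gt: "u (t0,h0) - v (t0,h0) > M0" using lt M0 xx by simp
      show False by (rule lemmaB[OF assms(1,2) lipu lipv L1 bd th0 gt])
    qed
  qed
  show ?thesis unfolding R_def[symmetric] by (rule antisym[OF le ge])
qed

end
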